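(* Let $K$ be a $\mathbb{Z}/2\mathbb{Z}$-pure global knot diagram in $T^2\times\mathbb{R}$ with respect to $v$ which is not isotopic to a knot contained in $T^2\times\{0\}$, which has at least one crossing, and which is minimal, i.e. no Reidemeister move of type II decreasing the number of crossings can be performed on it. Then $pr(K)$ contains a 2-gon: there are two distinct crossings $q_1,q_2$ and two arcs of $pr(K)$, each joining $q_1$ to $q_2$, whose union is a null-homotopic loop in $T^2$.
   Context: $T^2=\mathbb{R}^2/\mathbb{Z}^2$ with fixed generators $\alpha,\beta$ of $H_1(T^2;\mathbb{Z})$; $v$ is the constant unit vector field on $T^2$ tangent to the fibres of a linear submersion $f:T^2\to S^1$ whose fibres represent $\beta$; $pr:T^2\times\mathbb{R}\to T^2$ is the projection. A knot diagram is a smooth oriented knot $K\subset T^2\times\mathbb{R}$ such that $pr|_K$ is an immersion whose only multiple points are transverse double points, called crossings. $K$ is global (with respect to $v$) if $pr(K)$ is everywhere transverse to $v$; it is oriented so that (tangent vector of $pr(K)$, $v$) is a positively oriented basis of $T^2$. For a crossing $p$, smoothing $pr(K)$ at $p$ respecting orientations yields two oriented loops $K_p^+,K_p^-$ with $[K_p^+]+[K_p^-]=[K]$ in $H_1(T^2;\mathbb{Z})$. A global knot diagram $K$ is $\mathbb{Z}/2\mathbb{Z}$-pure if (1) $H_1(T^2;\mathbb{Z})/\langle[K]\rangle\cong\mathbb{Z}$, and (2) for every crossing $p$ the class of $K_p^+$ (equivalently of $K_p^-$) is nonzero in $G=(H_1(T^2;\mathbb{Z})/\langle[K]\rangle)\otimes\mathbb{Z}/2\mathbb{Z}\cong\mathbb{Z}/2\mathbb{Z}$.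 *)

theory Defs
  imports "HOL-Analysis.Analysis" "HOL-Algebra.Algebra"
begin

fun Ck :: "nat \<Rightarrow> ('a::real_normed_vector \<Rightarrow> 'b::real_normed_vector) \<Rightarrow> bool" where
  "Ck 0 f = continuous_on UNIV f"
| "Ck (Suc k) f = (\<exists>f'. (\<forall>x. (f has_derivative f' x) (at x)) \<and> (\<forall>v. Ck k (\<lambda>x. f' x v)))"

definition smooth :: "('a::real_normed_vector \<Rightarrow> 'b::real_normed_vector) \<Rightarrow> bool" where
  "smooth f \<longleftrightarrow> (\<forall>k. Ck k f)"

definition tor_eq :: "real \<times> real \<Rightarrow> real \<times> real \<Rightarrow> bool" where
  "tor_eq p q \<longleftrightarrow> fst p - fst q \<in> \<int> \<and> snd p - snd q \<in> \<int>"

text \<open>A knot K in T^2 x R is given by a lift t |-> (x t, y t, z t) to R^2 x R of a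
  1-periodic parametrisation of S^1 = R/Z; (a,b) = [K] in H_1(T^2) = Z^2 w.r.t. the
  fixed generators alpha = (1,0), beta = (0,1).\<close>
definition knot_embedding :: "(real \<Rightarrow> real) \<Rightarrow> (real \<Rightarrow> real) \<Rightarrow> (real \<Rightarrow> real) \<Rightarrow> int \<Rightarrow> int \<Rightarrow> bool" where
  "knot_embedding x y z a b \<longleftrightarrow>
     smooth x \<and> smooth y \<and> smooth z \<and>
     (\<forall>t. x (t + 1) = x t + of_int a \<and> y (t + 1) = y t + of_int b \<and> z (t + 1) = z t) \<and>
     (\<forall>t. (deriv x t, deriv y t, deriv z t) \<noteq> 0) \<and>
     (\<forall>s t. tor_eq (x s, y s) (x t, y t) \<and> z s = z t \<longrightarrow> s - t \<in> \<int>)"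

text \<open>s, t are the two preimages of a crossing of pr(K).\<close>
definition is_crossing :: "(real \<Rightarrow> real) \<Rightarrow> (real \<Rightarrow> real) \<Rightarrow> real \<Rightarrow> real \<Rightarrow> bool" where
  "is_crossing x y s t \<longleftrightarrow> tor_eq (x s, y s) (x t, y t) \<and> s - t \<notin> \<int>"

text \<open>Global w.r.t. v = (0,1) (tangent to the fibres of f(u1,u2) = u1, which represent beta):
  pr(K) transverse to v and (tangent, v) positively oriented, i.e. x' > 0.\<close>
definition global_knot_diagram :: "(real \<Rightarrow> real) \<Rightarrow> (real \<Rightarrow> real) \<Rightarrow> (real \<Rightarrow> real) \<Rightarrow> int \<Rightarrow> int \<Rightarrow> bool" where
  "global_knot_diagram x y z a b \<longleftrightarrow>
     knot_embedding x y z a b \<and>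
     (\<forall>t. (deriv x t, deriv y t) \<noteq> 0) \<and>
     (\<forall>r s t. tor_eq (x r, y r) (x s, y s) \<and> tor_eq (x s, y s) (x t, y t) \<longrightarrow>
              r - s \<in> \<int> \<or> s - t \<in> \<int> \<or> r - t \<in> \<int>) \<and>
     (\<forall>s t. is_crossing x y s t \<longrightarrow> deriv x s * deriv y t - deriv y s * deriv x t \<noteq> 0) \<and>
     (\<forall>t. deriv x t > 0)"

abbreviation Z2grp :: "(int \<times> int) monoid" where
  "Z2grp \<equiv> DirProd integer_group integer_group"

text \<open>A class (m,n) in H_1 = Z^2 is nonzero in (Z^2/<(a,b)>) \<otimes> Z/2 = Z^2/(<(a,b)> + 2 Z^2).\<close>
definition nonzero_in_G :: "int \<Rightarrow> int \<Rightarrow> int \<Rightarrow> int \<Rightarrow> bool" where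
  "nonzero_in_G a b m n \<longleftrightarrow> \<not> (\<exists>k::int. even (m - k * a) \<and> even (n - k * b))"

text \<open>For a crossing with preimages s, t, the smoothed loop K_p^+ is pr(K) restricted to
  the parameter interval from s to t; its class is (x t - x s, y t - y s).\<close>
definition Z2_pure :: "(real \<Rightarrow> real) \<Rightarrow> (real \<Rightarrow> real) \<Rightarrow> int \<Rightarrow> int \<Rightarrow> bool" where
  "Z2_pure x y a b \<longleftrightarrow>
     (Z2grp Mod (generate Z2grp {(a, b)})) \<cong> integer_group \<and>
     (\<forall>s t m n. is_crossing x y s t \<and> x t - x s = of_int m \<and> y t - y s = of_int n
                 \<longrightarrow> nonzero_in_G a b m n)"

definition isotopic_to_flat :: "(real \<Rightarrow> real) \<Rightarrow> (real \<Rightarrow> real) \<Rightarrow> (real \<Rightarrow> real) \<Rightarrow> int \<Rightarrow> int \<Rightarrow> bool" where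
  "isotopic_to_flat x y z a b \<longleftrightarrow>
     (\<exists>(H1::real \<times> real \<Rightarrow> real) (H2::real \<times> real \<Rightarrow> real) (H3::real \<times> real \<Rightarrow> real).
        smooth H1 \<and> smooth H2 \<and> smooth H3 \<and>
        (\<forall>s \<in> {0..1}. knot_embedding (\<lambda>t. H1 (s, t)) (\<lambda>t. H2 (s, t)) (\<lambda>t. H3 (s, t)) a b) \<and>
        (\<forall>t. H1 (0, t) = x t \<and> H2 (0, t) = y t \<and> H3 (0, t) = z t) \<and>
        (\<forall>t. H3 (1, t) = 0))"

text \<open>Two arcs P([a0,a1]) and P([b0,b1]) of pr(K) (P = (x,y)) with disjoint interiors,
  joining two distinct crossings q1, q2 (meeting in different branches there), whose union
  is a null-homotopic loop, i.e. lifts to a closed loop in R^2.  Either both arcs run from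
  q1 to q2 (parallel) or in opposite directions (antiparallel).\<close>
definition arc_path :: "(real \<Rightarrow> real) \<Rightarrow> (real \<Rightarrow> real) \<Rightarrow> real \<Rightarrow> real \<Rightarrow> real \<times> real \<Rightarrow> real \<Rightarrow> real \<times> real" where
  "arc_path x y u0 u1 c = (\<lambda>\<tau>. (x (u0 + \<tau> * (u1 - u0)), y (u0 + \<tau> * (u1 - u0))) + c)"

definition arcs_ok :: "real \<Rightarrow> real \<Rightarrow> real \<Rightarrow> real \<Rightarrow> bool" where
  "arcs_ok a0 a1 b0 b1 \<longleftrightarrow> a0 < a1 \<and> b0 < b1 \<and>
     (\<forall>s \<in> {a0<..<a1}. \<forall>t \<in> {b0<..<b1}. s - t \<notin> \<int>)"

definition parallel_2gon :: "(real \<Rightarrow> real) \<Rightarrow> (real \<Rightarrow> real) \<Rightarrow> real \<Rightarrow> real \<Rightarrow> real \<Rightarrow> real \<Rightarrow> bool" where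
  "parallel_2gon x y a0 a1 b0 b1 \<longleftrightarrow> arcs_ok a0 a1 b0 b1 \<and>
     is_crossing x y a0 b0 \<and> is_crossing x y a1 b1 \<and> \<not> tor_eq (x a0, y a0) (x a1, y a1) \<and>
     (x a1 - x a0, y a1 - y a0) = (x b1 - x b0, y b1 - y b0)"

definition antiparallel_2gon :: "(real \<Rightarrow> real) \<Rightarrow> (real \<Rightarrow> real) \<Rightarrow> real \<Rightarrow> real \<Rightarrow> real \<Rightarrow> real \<Rightarrow> bool" where
  "antiparallel_2gon x y a0 a1 b0 b1 \<longleftrightarrow> arcs_ok a0 a1 b0 b1 \<and>
     is_crossing x y a0 b1 \<and> is_crossing x y a1 b0 \<and> \<not> tor_eq (x a0, y a0) (x a1, y a1) \<and>
     (x a1 - x a0, y a1 - y a0) + (x b1 - x b0, y b1 - y b0) = 0"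

definition has_2gon :: "(real \<Rightarrow> real) \<Rightarrow> (real \<Rightarrow> real) \<Rightarrow> bool" where
  "has_2gon x y \<longleftrightarrow> (\<exists>a0 a1 b0 b1. parallel_2gon x y a0 a1 b0 b1 \<or> antiparallel_2gon x y a0 a1 b0 b1)"

definition lifted_image :: "(real \<Rightarrow> real) \<Rightarrow> (real \<Rightarrow> real) \<Rightarrow> (real \<times> real) set" where
  "lifted_image x y = {(x t + of_int m, y t + of_int n) | t m n. True}"

text \<open>A Reidemeister II move decreasing the number of crossings can be performed: there is a
  2-gon whose lifted boundary loop is a simple closed curve bounding a disc whose interior
  meets no strand of pr(K), and one of the two arcs is the over-strand at both corners.\<close>
definition RII_reducible :: "(real \<Rightarrow> real) \<Rightarrow> (real \<Rightarrow> real) \<Rightarrow> (real \<Rightarrow> real) \<Rightarrow> bool" where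
  "RII_reducible x y z \<longleftrightarrow>
     (\<exists>a0 a1 b0 b1.
        (parallel_2gon x y a0 a1 b0 b1 \<and>
         (let g = arc_path x y a0 a1 0 +++
                  reversepath (arc_path x y b0 b1 ((x a0, y a0) - (x b0, y b0)))
          in simple_path g \<and> inside (path_image g) \<inter> lifted_image x y = {}) \<and>
         ((z a0 > z b0 \<and> z a1 > z b1) \<or> (z a0 < z b0 \<and> z a1 < z b1)))
      \<or> (antiparallel_2gon x y a0 a1 b0 b1 \<and>
         (let g = arc_path x y a0 a1 0 +++
                  arc_path x y b0 b1 ((x a1, y a1) - (x b0, y b0))
          in simple_path g \<and> inside (path_image g) \<inter> lifted_image x y = {}) \<and>
         ((z a0 > z b1 \<and> z a1 > z b0) \<or> (z a0 < z b1 \<and> z a1 < z b0))))"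

end

theory Submission
  imports Defs
begin


lemma smooth_DERIV:
  fixes f :: "real \<Rightarrow> real"
  assumes "smooth f" shows "DERIV f t :> deriv f t"
proof -
  have "Ck (Suc 0) f" using assms unfolding smooth_def by blast
  then obtain f' where "\<forall>x. (f has_derivative f' x) (at x)"
    by (simp only: Ck.simps) blast
  hence "f differentiable at t" unfolding differentiable_def by blast
  thus ?thesis using DERIV_deriv_iff_real_differentiable by blast
qed

lemma per_nat:
  fixes f :: "real \<Rightarrow> real"
  assumes "\<forall>t. f (t+1) = f t + c" shows "f (t + of_nat n) = f t + of_nat n * c"
proof (induction n)
  case 0 then show ?case by simp
next
  case (Suc n)
  have e: "t + of_nat (Suc n) = (t + of_nat n) + 1" by simp
  have "f (t + of_nat (Suc n)) = f ((t + of_nat n) + 1)" by (subst e) (rule refl)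
  also have "\<dots> = f (t + of_nat n) + c" using assms by blast
  finally show ?case using Suc by (simp add: algebra_simps)
qed

lemma per_int:
  fixes f :: "real \<Rightarrow> real"
  assumes "\<forall>t. f (t+1) = f t + c" shows "f (t + of_int k) = f t + of_int k * c"
proof (cases "k \<ge> 0")
  case True
  define n where "n = nat k"
  have "k = int n" using True unfolding n_def by simp
  then show ?thesis using per_nat[OF assms, of t n] by simp
next
  case False
  define n where "n = nat (-k)"
  have k: "k = - int n" using False unfolding n_def by simp
  have "f ((t - of_nat n) + of_nat n) = f (t - of_nat n) + of_nat n * c"
    by (rule per_nat[OF assms])
  then show ?thesis using k by simp
qed

lemma ivt0:
  fixes f :: "real \<Rightarrow> real"
  assumes cont: "\<forall>w. isCont f w" and pq: "p \<le> q" and s: "f p * f q \<le> 0"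
  shows "\<exists>w. p \<le> w \<and> w \<le> q \<and> f w = 0"
proof -
  have "(f p \<le> 0 \<and> 0 \<le> f q) \<or> (0 \<le> f p \<and> f q \<le> 0)"
    using s by (auto simp: mult_le_0_iff)
  thus ?thesis
  proof
    assume "f p \<le> 0 \<and> 0 \<le> f q"
    thus ?thesis using IVT[of f p 0 q] pq cont by auto
  next
    assume "0 \<le> f p \<and> f q \<le> 0"
    thus ?thesis using IVT2[of f q 0 p] pq cont by auto
  qed
qed

lemma abs_rep:
  fixes r a k :: int assumes a: "a > 0" "-a \<le> 2*r" "2*r \<le> a" shows "\<bar>r\<bar> \<le> \<bar>r + k*a\<bar>"
proof -
  consider "k \<ge> 1" | "k = 0" | "k \<le> -1" by arith
  then show ?thesis
  proof cases
    case 1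
    have "1*a \<le> k*a" by (rule mult_right_mono) (use 1 a in simp_all)
    then show ?thesis using a by arith
  next
    case 2 then show ?thesis by simp
  next
    case 3
    have "k*a \<le> (-1)*a" by (rule mult_right_mono) (use 3 a in simp_all)
    then show ?thesis using a by arith
  qed
qed

lemma min_rep:
  fixes a m0 :: int assumes "a > 0"
  shows "\<exists>k0. \<forall>k. \<bar>m0 + k0*a\<bar> \<le> \<bar>m0 + k0*a + k*a\<bar>"
proof -
  define r where "r = m0 mod a"
  define q where "q = m0 div a"
  have r: "0 \<le> r" "r < a" using assms unfolding r_def by auto
  have m0: "m0 = q*a + r" unfolding r_def q_def by simp
  show ?thesis
  proof (cases "2*r \<le> a")
    case True
    have e: "m0 + - q * a = r" using m0 by simp
    show ?thesis
    proof (rule exI[of _ "-q"], intro allI)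
      fix k
      have h: "a > 0" "-a \<le> 2*r" "2*r \<le> a" using r True assms by linarith+
      have "\<bar>r\<bar> \<le> \<bar>r + k*a\<bar>" using h by (rule abs_rep)
      thus "\<bar>m0 + -q*a\<bar> \<le> \<bar>m0 + -q*a + k*a\<bar>" by (simp only: e)
    qed
  next
    case False
    have e: "m0 + (- q - 1) * a = r - a" unfolding m0 by (simp add: ring_distribs)
    show ?thesis
    proof (rule exI[of _ "-q - 1"], intro allI)
      fix k
      have h: "a > 0" "-a \<le> 2*(r - a)" "2*(r - a) \<le> a" using r False assms right_diff_distrib[of 2 r a] by linarith+
      have "\<bar>r - a\<bar> \<le> \<bar>(r - a) + k*a\<bar>" using h by (rule abs_rep)
      thus "\<bar>m0 + (-q - 1)*a\<bar> \<le> \<bar>m0 + (-q - 1)*a + k*a\<bar>" by (simp only: e)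
    qed
  qed
qed


lemma gen_Z2: "v \<in> generate Z2grp {(a, b)} \<Longrightarrow> \<exists>k. v = (k*a, k*b)"
proof (induction v rule: generate.induct)
  case one then show ?case by (auto intro: exI[of _ 0])
next
  case (incl h) then show ?case by (auto intro: exI[of _ 1])
next
  case (inv h) then show ?case
    by (auto intro: exI[of _ "-1"] simp: inv_DirProd)
next
  case (eng h1 h2) then show ?case
    by (auto simp: algebra_simps intro: exI[of _ "_ + _"]) (metis distrib_right)
qed

lemma not_both_even:
  assumes iso: "(Z2grp Mod (generate Z2grp {(a, b)})) \<cong> integer_group" and "a \<noteq> 0"
  shows "\<not> (even a \<and> even b)"
proof
  assume ev: "even a \<and> even b"
  then obtain a' b' where ab: "a = 2*a'" "b = 2*b'" by (auto elim!: evenE)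
  let ?H = "generate Z2grp {(a, b)}"
  have gZ: "group Z2grp" by (simp add: DirProd_group)
  have nH: "?H \<lhd> Z2grp"
    by (rule group.normal_generateI[OF gZ]) (auto simp: inv_DirProd)
  interpret N: normal ?H Z2grp by (rule nH)
  have gQ: "group (Z2grp Mod ?H)" by (rule N.factorgroup_is_group)
  obtain phi where phi: "phi \<in> hom (Z2grp Mod ?H) integer_group"
     "bij_betw phi (carrier (Z2grp Mod ?H)) (carrier integer_group)"
    using iso unfolding is_iso_def iso_def by auto
  define c where "c = ?H #>\<^bsub>Z2grp\<^esub> (a', b')"
  have cC: "c \<in> carrier (Z2grp Mod ?H)"
    unfolding c_def FactGroup_def by (auto intro!: group.rcosetsI[OF gZ] N.subset)
  have HC: "?H \<in> carrier (Z2grp Mod ?H)"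
    unfolding FactGroup_def using N.subgroup_in_rcosets[OF gZ] by simp
  have "c \<otimes>\<^bsub>Z2grp Mod ?H\<^esub> c = ?H #>\<^bsub>Z2grp\<^esub> (a, b)"
    unfolding c_def mult_FactGroup
    by (subst N.rcos_sum) (auto simp: ab integer_group_def)
  also have "\<dots> = ?H"
    by (rule N.rcos_const[OF gZ]) (rule generate.incl, simp)
  finally have cc: "c \<otimes>\<^bsub>Z2grp Mod ?H\<^esub> c = ?H" .
  have "phi c + phi c = phi ?H"
    using hom_mult[OF phi(1) cC cC] cc by simp
  moreover have "phi ?H = 0"
    using hom_one[OF phi(1) gQ group_integer_group] by simp
  ultimately have "phi c = phi ?H" by simp
  hence "c = ?H" using phi(2) cC HC unfolding bij_betw_def inj_on_def by blast
  moreover have "(a', b') \<in> c" unfolding c_def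
    by (rule group.rcos_self[OF gZ]) (auto intro: N.subgroup_axioms)
  ultimately have "(a', b') \<in> ?H" by simp
  then obtain k where "(a', b') = (k*a, k*b)" using gen_Z2 by blast
  hence "a' = k * (2*a')" using ab by simp
  moreover have "a' \<noteq> 0" using assms ab by simp
  ultimately have "1 = 2*k" by (metis mult.commute mult.left_commute mult_cancel_left1)
  thus False by presburger
qed



lemma neg_mult_le:
  fixes j a :: int assumes "a > 0" "j*a < 0" shows "j*a \<le> -a"
proof -
  have "j < 0" using assms by (simp add: mult_less_0_iff)
  hence "j \<le> -1" by simp
  hence "j*a \<le> (-1)*a" using assms by (intro mult_right_mono) auto
  thus ?thesis by simp
qed

lemma ints_obtain: "(u::real) \<in> \<int> \<Longrightarrow> \<exists>k::int. u = of_int k"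
  by (auto elim: Ints_cases)

locale KD =
  fixes x y z :: "real \<Rightarrow> real" and a b :: int
  assumes gkd: "global_knot_diagram x y z a b" and pure: "Z2_pure x y a b"
begin

lemma gkd_ke: "knot_embedding x y z a b"
  using gkd unfolding global_knot_diagram_def by (rule conjunct1)
lemma gkd_rest: "(\<forall>r s t. tor_eq (x r, y r) (x s, y s) \<and> tor_eq (x s, y s) (x t, y t) \<longrightarrow>
              r - s \<in> \<int> \<or> s - t \<in> \<int> \<or> r - t \<in> \<int>)
   \<and> (\<forall>s t. is_crossing x y s t \<longrightarrow> deriv x s * deriv y t - deriv y s * deriv x t \<noteq> 0)
   \<and> (\<forall>t. deriv x t > 0)"
  using gkd unfolding global_knot_diagram_def by (rule conjunct2[OF conjunct2])

lemma smx: "smooth x" using gkd_ke unfolding knot_embedding_def by (rule conjunct1)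
lemma smy: "smooth y" using gkd_ke unfolding knot_embedding_def by (rule conjunct1[OF conjunct2])
lemma per1: "\<forall>t. x (t + 1) = x t + of_int a \<and> y (t + 1) = y t + of_int b \<and> z (t + 1) = z t"
  using gkd_ke unfolding knot_embedding_def by (rule conjunct1[OF conjunct2[OF conjunct2[OF conjunct2]]])
lemma xp1: "\<forall>t. x (t+1) = x t + of_int a" using per1 by blast
lemma yp1: "\<forall>t. y (t+1) = y t + of_int b" using per1 by blast
lemma triple: "\<forall>r s t. tor_eq (x r, y r) (x s, y s) \<and> tor_eq (x s, y s) (x t, y t) \<longrightarrow>
              r - s \<in> \<int> \<or> s - t \<in> \<int> \<or> r - t \<in> \<int>" using gkd_rest by (rule conjunct1)
lemma transv: "\<forall>s t. is_crossing x y s t \<longrightarrow> deriv x s * deriv y t - deriv y s * deriv x t \<noteq> 0"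
  using gkd_rest by (rule conjunct1[OF conjunct2])
lemma xpos: "\<forall>t. deriv x t > 0" using gkd_rest by (rule conjunct2[OF conjunct2])

lemma pureF: "is_crossing x y s t \<Longrightarrow> x t - x s = of_int m \<Longrightarrow> y t - y s = of_int n
                 \<Longrightarrow> nonzero_in_G a b m n"
  using pure unfolding Z2_pure_def by blast

lemma isoQ: "(Z2grp Mod (generate Z2grp {(a, b)})) \<cong> integer_group"
  using pure unfolding Z2_pure_def by blast

lemma dx: "DERIV x t :> deriv x t" by (rule smooth_DERIV[OF smx])
lemma dy: "DERIV y t :> deriv y t" by (rule smooth_DERIV[OF smy])
lemma contx: "isCont x t" by (rule DERIV_isCont[OF dx])

lemma xper: "x (t + of_int k) = x t + of_int k * of_int a" by (rule per_int[OF xp1])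
lemma yper: "y (t + of_int k) = y t + of_int k * of_int b" by (rule per_int[OF yp1])

lemma xmono: "s < t \<Longrightarrow> x s < x t"
  by (rule DERIV_pos_imp_increasing) (use dx xpos in blast)+

lemma smono: "strict_mono x" by (rule strict_monoI) (rule xmono)

lemma xless: "x s < x t \<longleftrightarrow> s < t" using smono by (rule strict_mono_less)
lemma xle: "x s \<le> x t \<longleftrightarrow> s \<le> t" using smono by (rule strict_mono_less_eq)
lemma xeq: "x s = x t \<longleftrightarrow> s = t" using smono by (rule strict_mono_eq)

lemma a_pos: "a > 0"
proof -
  have "x 0 < x (0 + 1)" by (rule xmono) simp
  moreover have "x (0 + 1) = x 0 + of_int a" using xp1 by blast
  ultimately have "real_of_int a > 0" by linarith
  thus ?thesis by simp
qed

lemma x_surj: "\<exists>t. x t = u"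
proof -
  define k where "k = \<lfloor>(u - x 0) / of_int a\<rfloor>"
  have ap: "real_of_int a > 0" using a_pos by simp
  have k1: "of_int k \<le> (u - x 0) / of_int a" "(u - x 0) / of_int a < of_int k + 1"
    unfolding k_def by linarith+
  have "of_int k * of_int a \<le> u - x 0" using k1(1) ap by (simp add: le_divide_eq)
  moreover have "x (0 + of_int k) = x 0 + of_int k * of_int a" by (rule xper)
  ultimately have l: "x (0 + of_int k) \<le> u" by linarith
  have "u - x 0 < (of_int k + 1) * of_int a" using k1(2) ap by (simp add: divide_less_eq)
  moreover have "x (0 + of_int (k+1)) = x 0 + of_int (k+1) * of_int a" by (rule xper)
  ultimately have r: "u \<le> x (0 + of_int (k + 1))" by simp
  have "of_int k \<le> real_of_int (k + 1)" by simp
  then obtain t where "x t = u" using IVT[of x "0 + of_int k" u "0 + of_int (k+1)"] l r contx by auto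
  thus ?thesis by blast
qed

lemma surjx: "surj x" unfolding surj_def using x_surj by (metis)
lemma injx: "inj x" using smono by (rule strict_mono_imp_inj_on)

definition xi :: "real \<Rightarrow> real" where "xi = inv_into UNIV x"

lemma x_xi [simp]: "x (xi u) = u" unfolding xi_def by (rule surj_f_inv_f[OF surjx])
lemma xi_x [simp]: "xi (x t) = t" unfolding xi_def by (rule inv_f_f[OF injx])

lemma xi_less: "u < v \<Longrightarrow> xi u < xi v"
proof -
  assume "u < v"
  hence "x (xi u) < x (xi v)" by simp
  thus ?thesis by (simp only: xless)
qed

lemma xi_per: "xi (u + of_int k * of_int a) = xi u + of_int k"
proof -
  have "x (xi u + of_int k) = u + of_int k * of_int a" by (simp add: xper)
  hence "xi (x (xi u + of_int k)) = xi (u + of_int k * of_int a)" by simp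
  thus ?thesis by simp
qed

lemma cont_xi: "isCont xi u"
proof -
  have "isCont xi (x (xi u))"
    by (rule isCont_inverse_function[of 1]) (auto intro: contx)
  thus ?thesis by simp
qed

lemma dxi: "DERIV xi u :> inverse (deriv x (xi u))"
proof (rule DERIV_inverse_function[where f=x and g=xi and x=u and a="u - 1" and b="u + 1"])
  show "DERIV x (xi u) :> deriv x (xi u)" by (rule dx)
  show "deriv x (xi u) \<noteq> 0" using xpos by (metis less_irrefl)
qed (auto intro: cont_xi)

definition g :: "real \<Rightarrow> real" where "g u = y (xi u)"

lemma g_per: "g (u + of_int k * of_int a) = g u + of_int k * of_int b"
  unfolding g_def by (simp add: xi_per yper)

lemma dg: "DERIV g u :> deriv y (xi u) * inverse (deriv x (xi u))"
proof -
  have "DERIV (\<lambda>v. y (xi v)) u :> deriv y (xi u) * inverse (deriv x (xi u))"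
    by (rule DERIV_chain2[OF dy dxi])
  moreover have "(\<lambda>v. y (xi v)) = g" by (auto simp: g_def)
  ultimately show ?thesis by simp
qed

lemma cont_g: "isCont g u" by (rule DERIV_isCont[OF dg])

lemma cont_gs: "isCont (\<lambda>v. g (v + c)) u"
  by (rule isCont_o2[where f="\<lambda>v. v + c" and a=u and g=g]) (auto intro: cont_g)

lemma cross_X:
  assumes nd: "\<not> a dvd m" and e: "g (u + of_int m) - g u = of_int n"
  shows "is_crossing x y (xi u) (xi (u + of_int m))"
  unfolding is_crossing_def tor_eq_def
proof (intro conjI)
  show "fst (x (xi u), y (xi u)) - fst (x (xi (u + of_int m)), y (xi (u + of_int m))) \<in> \<int>"
    by simp
  have "y (xi u) - y (xi (u + of_int m)) = - of_int n" using e unfolding g_def by simp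
  thus "snd (x (xi u), y (xi u)) - snd (x (xi (u + of_int m)), y (xi (u + of_int m))) \<in> \<int>"
    by simp
  show "xi u - xi (u + of_int m) \<notin> \<int>"
  proof
    assume "xi u - xi (u + of_int m) \<in> \<int>"
    then obtain k where k: "xi u - xi (u + of_int m) = of_int k" using ints_obtain by blast
    hence "xi u = xi (u + of_int m) + of_int k" by simp
    hence "x (xi u) = x (xi (u + of_int m) + of_int k)" by simp
    hence "u = u + of_int m + of_int k * of_int a" by (simp add: xper)
    hence "real_of_int m = of_int (- k * a)" by simp
    hence "m = - k * a" by (simp only: of_int_eq_iff)
    thus False using nd by simp
  qed
qed

lemma pure_X:
  assumes nd: "\<not> a dvd m" and e: "g (u + of_int m) - g u = of_int n"
  shows "nonzero_in_G a b m n"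
  by (rule pureF[OF cross_X[OF nd e]]) (use e in \<open>simp_all add: g_def\<close>)

lemma nbe: "\<not> (even a \<and> even b)"
  using not_both_even[OF isoQ] a_pos by simp

end


context KD begin

lemma bigon:
  assumes nd: "\<not> a dvd m" and minm: "\<forall>k. \<bar>m\<bar> \<le> \<bar>m + k*a\<bar>"
    and pq: "p < q" "q - p \<le> \<bar>real_of_int m\<bar>"
    and dp: "g (p + of_int m) - g p = of_int n" and dq: "g (q + of_int m) - g q = of_int n"
  shows "has_2gon x y"
proof -
  define a0 where "a0 = xi p"
  define a1 where "a1 = xi q"
  define b0 where "b0 = xi (p + of_int m)"
  define b1 where "b1 = xi (q + of_int m)"
  have ap: "a > 0" by (rule a_pos)
  have m1: "\<bar>m\<bar> \<le> \<bar>m + 1*a\<bar>" "\<bar>m\<bar> \<le> \<bar>m + (-1)*a\<bar>" using minm by blast+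
  have am: "2*\<bar>m\<bar> \<le> a" using m1 ap by arith
  have mnz: "m \<noteq> 0" using nd by auto
  have ma: "\<bar>m\<bar> < a" using am mnz by arith
  have xa0: "x a0 = p" and xa1: "x a1 = q" and xb0: "x b0 = p + of_int m" and xb1: "x b1 = q + of_int m"
    by (simp_all add: a0_def a1_def b0_def b1_def)
  have ya0: "y a0 = g p" and ya1: "y a1 = g q" and yb0: "y b0 = g (p + of_int m)"
    and yb1: "y b1 = g (q + of_int m)"
    by (simp_all add: a0_def a1_def b0_def b1_def g_def)
  have c0: "is_crossing x y a0 b0" unfolding a0_def b0_def by (rule cross_X[OF nd dp])
  have c1: "is_crossing x y a1 b1" unfolding a1_def b1_def by (rule cross_X[OF nd dq])
  have ao: "arcs_ok a0 a1 b0 b1"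
    unfolding arcs_ok_def
  proof (intro conjI ballI)
    show "a0 < a1" unfolding a0_def a1_def by (rule xi_less) (rule pq(1))
    show "b0 < b1" unfolding b0_def b1_def by (rule xi_less) (use pq(1) in simp)
    fix s t assume s: "s \<in> {a0<..<a1}" and t: "t \<in> {b0<..<b1}"
    show "s - t \<notin> \<int>"
    proof
      assume "s - t \<in> \<int>"
      then obtain k where k: "s - t = of_int k" using ints_obtain by blast
      have "x s = x (t + of_int k)" using k by (simp add: algebra_simps)
      hence xs: "x s = x t + of_int k * of_int a" by (simp add: xper)
      have "x a0 < x s" "x s < x a1" using s by (simp_all add: xless)
      hence s2: "p < x s" "x s < q" using xa0 xa1 by simp_all
      have "x b0 < x t" "x t < x b1" using t by (simp_all add: xless)
      hence t2: "p + of_int m < x t" "x t < q + of_int m" using xb0 xb1 by simp_all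
      have "\<bar>real_of_int (m + k*a)\<bar> < q - p" using xs s2 t2 by (simp add: abs_less_iff)
      hence "\<bar>real_of_int (m + k*a)\<bar> < \<bar>real_of_int m\<bar>" using pq(2) by linarith
      hence "\<bar>m + k*a\<bar> < \<bar>m\<bar>" by (simp only: of_int_abs[symmetric] of_int_less_iff)
      thus False using minm by (meson not_le)
    qed
  qed
  have nt: "\<not> tor_eq (x a0, y a0) (x a1, y a1)"
  proof
    assume T: "tor_eq (x a0, y a0) (x a1, y a1)"
    hence T1: "p - q \<in> \<int>" and T2: "g p - g q \<in> \<int>"
      unfolding tor_eq_def using xa0 xa1 ya0 ya1 by simp_all
    have tb: "tor_eq (x b0, y b0) (x a1, y a1)"
      unfolding tor_eq_def
    proof (simp only: fst_conv snd_conv, intro conjI)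
      have "x b0 - x a1 = (p - q) + of_int m" using xb0 xa1 by simp
      thus "x b0 - x a1 \<in> \<int>" using T1 by simp
      have "y b0 - y a1 = (g p - g q) + of_int n" using yb0 ya1 dp by simp
      thus "y b0 - y a1 \<in> \<int>" using T2 by simp
    qed
    have t0: "tor_eq (x a0, y a0) (x b0, y b0)" using c0 unfolding is_crossing_def by simp
    have nab: "a0 - b0 \<notin> \<int>" using c0 unfolding is_crossing_def by simp
    have "a0 - b0 \<in> \<int> \<or> b0 - a1 \<in> \<int> \<or> a0 - a1 \<in> \<int>" using triple t0 tb by blast
    hence "b0 - a1 \<in> \<int> \<or> a0 - a1 \<in> \<int>" using nab by blast
    thus False
    proof
      assume "a0 - a1 \<in> \<int>"
      then obtain j where j: "a0 - a1 = of_int j" using ints_obtain by blast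
      have "x a0 = x (a1 + of_int j)" using j by (simp add: algebra_simps)
      hence "p = q + of_int j * of_int a" using xa0 xa1 by (simp add: xper)
      hence e: "real_of_int (j*a) = p - q" by simp
      have "real_of_int (j*a) < 0" "- \<bar>real_of_int m\<bar> \<le> real_of_int (j*a)" using e pq by linarith+
      hence "j*a < 0" "- \<bar>m\<bar> \<le> j*a" by linarith+
      moreover have "j*a < 0 \<Longrightarrow> j*a \<le> -a" by (rule neg_mult_le[OF ap])
      ultimately show False using ma by linarith
    next
      assume "b0 - a1 \<in> \<int>"
      then obtain j where j: "b0 - a1 = of_int j" using ints_obtain by blast
      have "x b0 = x (a1 + of_int j)" using j by (simp add: algebra_simps)
      hence pm: "p + of_int m = q + of_int j * of_int a" using xb0 xa1 by (simp add: xper)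
      have gpm: "g (p + of_int m) = g q + of_int j * of_int b" unfolding pm by (rule g_per)
      define M where "M = 2*m - j*a"
      define N where "N = 2*n - j*b"
      have qm: "q + of_int m = p + of_int M" unfolding M_def using pm by simp
      have gM: "g (p + of_int M) - g p = of_int N"
        unfolding N_def using dq dp gpm qm by simp
      show False
      proof (cases "a dvd 2*m")
        case True
        then obtain i where i: "2*m = a*i" by blast
        have "odd i"
        proof
          assume "even i"
          then obtain i' where "i = 2*i'" by blast
          hence "m = a*i'" using i by simp
          thus False using nd by simp
        qed
        have "M = (i - j) * a" unfolding M_def using i by (simp add: algebra_simps)
        hence "g (p + of_int M) = g p + of_int (i - j) * of_int b"
          using g_per[of p "i - j"] by simp
        hence "of_int N = real_of_int ((i - j) * b)" using gM by simp
        hence "N = (i-j)*b" by (simp only: of_int_eq_iff)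
        hence "2*n = i*b" unfolding N_def by (simp add: algebra_simps)
        hence eb: "even b" using \<open>odd i\<close> by (metis dvd_triv_left even_mult_iff)
        have ea: "even a" using i \<open>odd i\<close> by (metis dvd_triv_left even_mult_iff)
        show False using nbe ea eb by simp
      next
        case False
        have "\<not> a dvd M"
        proof
          assume "a dvd M"
          hence "a dvd M + j*a" by simp
          thus False using False unfolding M_def by simp
        qed
        hence "nonzero_in_G a b M N" using gM by (rule pure_X)
        moreover have "even (M - (-j)*a) \<and> even (N - (-j)*b)"
          unfolding M_def N_def by simp
        ultimately show False unfolding nonzero_in_G_def by blast
      qed
    qed
  qed
  have disp: "(x a1 - x a0, y a1 - y a0) = (x b1 - x b0, y b1 - y b0)"
    using xa0 xa1 xb0 xb1 ya0 ya1 yb0 yb1 dp dq by simp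
  have "parallel_2gon x y a0 a1 b0 b1"
    unfolding parallel_2gon_def using ao c0 c1 nt disp by blast
  thus ?thesis unfolding has_2gon_def by blast
qed

end


context KD begin

lemma caseC:
  assumes nd: "\<not> a dvd m"
    and d0: "g (w + of_int m) - g w - of_int n = 0"
    and dd: "DERIV (\<lambda>v. g (v + of_int m) - g v - of_int n) w :> d" and dnz: "d \<noteq> 0"
    and nl: "\<forall>v. w - \<bar>real_of_int m\<bar> \<le> v \<and> v < w \<longrightarrow> g (v + of_int m) - g v - of_int n \<noteq> 0"
    and nr: "\<forall>v. w < v \<and> v \<le> w + \<bar>real_of_int m\<bar> \<longrightarrow> g (v + of_int m) - g v - of_int n \<noteq> 0"
  shows False
proof -
  define D where "D = (\<lambda>v. g (v + of_int m) - g v - of_int n)"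
  define mu where "mu = \<bar>real_of_int m\<bar>"
  have mnz: "m \<noteq> 0" using nd by auto
  have mu: "mu > 0" unfolding mu_def using mnz by simp
  have contD: "\<forall>v. isCont D v"
    unfolding D_def by (intro allI continuous_intros cont_gs cont_g)
  have Dw: "D w = 0" using d0 unfolding D_def by simp
  have dD: "DERIV D w :> d" using dd unfolding D_def by simp
  have nl': "\<And>v. w - mu \<le> v \<Longrightarrow> v < w \<Longrightarrow> D v \<noteq> 0" using nl unfolding D_def mu_def by blast
  have nr': "\<And>v. w < v \<Longrightarrow> v \<le> w + mu \<Longrightarrow> D v \<noteq> 0" using nr unfolding D_def mu_def by blast
  have right: "D (w + mu) * D (w + h) > 0" if h: "0 < h" "h \<le> mu" "D (w + h) \<noteq> 0" for h
  proof (rule ccontr)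
    assume "\<not> D (w + mu) * D (w + h) > 0"
    hence "D (w + h) * D (w + mu) \<le> 0" by (simp add: mult.commute)
    then obtain v where v: "w + h \<le> v" "v \<le> w + mu" "D v = 0"
      using ivt0[OF contD, of "w + h" "w + mu"] h by auto
    show False using nr'[of v] v h by linarith
  qed
  have left: "D (w - mu) * D (w - h) > 0" if h: "0 < h" "h \<le> mu" "D (w - h) \<noteq> 0" for h
  proof (rule ccontr)
    assume "\<not> D (w - mu) * D (w - h) > 0"
    hence "D (w - mu) * D (w - h) \<le> 0" by simp
    then obtain v where v: "w - mu \<le> v" "v \<le> w - h" "D v = 0"
      using ivt0[OF contD, of "w - mu" "w - h"] h by auto
    show False using nl'[of v] v h by linarith
  qed
  have sides: "D (w + mu) * D (w - mu) < 0"
  proof (cases "d > 0")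
    case True
    obtain e1 where e1: "e1 > 0" "\<forall>h>0. h < e1 \<longrightarrow> D w < D (w + h)"
      using DERIV_pos_inc_right[OF dD True] by blast
    obtain e2 where e2: "e2 > 0" "\<forall>h>0. h < e2 \<longrightarrow> D (w - h) < D w"
      using DERIV_pos_inc_left[OF dD True] by blast
    define h1 where "h1 = min (e1/2) mu"
    define h2 where "h2 = min (e2/2) mu"
    have h1: "0 < h1" "h1 \<le> mu" "h1 < e1" unfolding h1_def using e1 mu by auto
    have h2: "0 < h2" "h2 \<le> mu" "h2 < e2" unfolding h2_def using e2 mu by auto
    have p1: "D (w + h1) > 0" using e1 h1 Dw by auto
    have p2: "D (w - h2) < 0" using e2 h2 Dw by auto
    have "D (w + mu) > 0" using right[OF h1(1,2)] p1 by (simp add: zero_less_mult_iff)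
    moreover have "D (w - mu) < 0" using left[OF h2(1,2)] p2 by (simp add: zero_less_mult_iff)
    ultimately show ?thesis by (simp add: mult_pos_neg)
  next
    case False
    hence dn: "d < 0" using dnz by simp
    obtain e1 where e1: "e1 > 0" "\<forall>h>0. h < e1 \<longrightarrow> D w > D (w + h)"
      using DERIV_neg_dec_right[OF dD dn] by blast
    obtain e2 where e2: "e2 > 0" "\<forall>h>0. h < e2 \<longrightarrow> D w < D (w - h)"
      using DERIV_neg_dec_left[OF dD dn] by blast
    define h1 where "h1 = min (e1/2) mu"
    define h2 where "h2 = min (e2/2) mu"
    have h1: "0 < h1" "h1 \<le> mu" "h1 < e1" unfolding h1_def using e1 mu by auto
    have h2: "0 < h2" "h2 \<le> mu" "h2 < e2" unfolding h2_def using e2 mu by auto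
    have p1: "D (w + h1) < 0" using e1 h1 Dw by auto
    have p2: "D (w - h2) > 0" using e2 h2 Dw by auto
    have "D (w + mu) < 0" using right[OF h1(1,2)] p1 by (simp add: zero_less_mult_iff)
    moreover have "D (w - mu) > 0" using left[OF h2(1,2)] p2 by (simp add: zero_less_mult_iff)
    ultimately show ?thesis by (simp add: mult_neg_pos)
  qed
  define E where "E = (\<lambda>v. g (v + of_int (2*m)) - g v - of_int (2*n))"
  have ED: "E v = D v + D (v + of_int m)" for v
  proof -
    have e: "v + of_int (2*m) = (v + of_int m) + of_int m" by simp
    show ?thesis unfolding E_def D_def by (simp only: e)
  qed
  have E1: "E w = D (w + of_int m)" using ED[of w] Dw by simp
  have E2: "E (w - of_int m) = D (w - of_int m)" using ED[of "w - of_int m"] Dw by simp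
  have Eneg: "E w * E (w - of_int m) < 0"
  proof (cases "m > 0")
    case True
    hence "mu = of_int m" unfolding mu_def by simp
    thus ?thesis using E1 E2 sides by simp
  next
    case False
    hence "mu = - of_int m" unfolding mu_def by simp
    thus ?thesis using E1 E2 sides by (simp add: mult.commute)
  qed
  have contE: "\<forall>v. isCont E v"
    unfolding E_def by (intro allI continuous_intros cont_gs cont_g)
  show False
  proof (cases "a dvd 2*m")
    case True
    then obtain i where i: "2*m = i*a" by (metis dvd_def mult.commute)
    have "E v = of_int i * of_int b - of_int (2*n)" for v
      unfolding E_def i using g_per[of v i] by simp
    hence "E w = E (w - of_int m)" by simp
    thus False using Eneg by (metis not_square_less_zero)
  next
    case False
    have "\<exists>v. E v = 0"
    proof (cases "m > 0")
      case True
      hence "w - of_int m \<le> w" by simp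
      thus ?thesis using ivt0[OF contE, of "w - of_int m" w] Eneg by (auto simp: mult.commute)
    next
      case False
      hence "w \<le> w - of_int m" by simp
      thus ?thesis using ivt0[OF contE, of w "w - of_int m"] Eneg by auto
    qed
    then obtain v where "E v = 0" by blast
    hence "g (v + of_int (2*m)) - g v = of_int (2*n)" unfolding E_def by simp
    hence "nonzero_in_G a b (2*m) (2*n)" using False by (intro pure_X) auto
    moreover have "even (2*m - 0*a) \<and> even (2*n - 0*b)" by simp
    ultimately show False unfolding nonzero_in_G_def by blast
  qed
qed

end

theorem mainTheorem6:
  fixes x y z :: "real \<Rightarrow> real" and a b :: int
  assumes "global_knot_diagram x y z a b"
    and "Z2_pure x y a b"
    and "\<not> isotopic_to_flat x y z a b"
    and "\<exists>s t. is_crossing x y s t"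
    and "\<not> RII_reducible x y z"
  shows "has_2gon x y"
proof -
  interpret KD x y z a b using assms(1,2) by unfold_locales
  obtain s t where c: "is_crossing x y s t" using assms(4) by blast
  have c1: "x s - x t \<in> \<int>" "y s - y t \<in> \<int>" "s - t \<notin> \<int>"
    using c unfolding is_crossing_def tor_eq_def by simp_all
  have "x t - x s \<in> \<int>" using c1(1) Ints_minus by fastforce
  then obtain m0 where m0: "x t - x s = of_int m0" using ints_obtain by blast
  have "y t - y s \<in> \<int>" using c1(2) Ints_minus by fastforce
  then obtain n0 where n0: "y t - y s = of_int n0" using ints_obtain by blast
  obtain k0 where k0: "\<forall>k. \<bar>m0 + k0*a\<bar> \<le> \<bar>m0 + k0*a + k*a\<bar>"
    using min_rep[OF a_pos] by blast
  define m where "m = m0 + k0*a"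
  define n where "n = n0 + k0*b"
  define t' where "t' = t + of_int k0"
  have xt': "x t' = x s + of_int m" unfolding t'_def m_def using m0 by (simp add: xper)
  have yt': "y t' = y s + of_int n" unfolding t'_def n_def using n0 by (simp add: yper)
  have st': "s - t' \<notin> \<int>"
  proof
    assume "s - t' \<in> \<int>"
    hence "(s - t') + of_int k0 \<in> \<int>" by simp
    thus False using c1(3) unfolding t'_def by (simp add: algebra_simps)
  qed
  have nd: "\<not> a dvd m"
  proof
    assume "a dvd m"
    then obtain j where j: "m = j*a" by (metis dvd_def mult.commute)
    have "x t' = x (s + of_int j)" using xt' j by (simp add: xper)
    hence "t' = s + of_int j" by (simp add: xeq)
    thus False using st' by simp
  qed
  have minm: "\<forall>k. \<bar>m\<bar> \<le> \<bar>m + k*a\<bar>" using k0 unfolding m_def by simp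
  define w where "w = x s"
  have xiw: "xi w = s" unfolding w_def by simp
  have xiwm: "xi (w + of_int m) = t'" unfolding w_def using xt' by (metis xi_x)
  have d0: "g (w + of_int m) - g w = of_int n" unfolding g_def xiw xiwm using yt' by simp
  have ct': "is_crossing x y s t'"
    unfolding is_crossing_def tor_eq_def using xt' yt' st' by simp
  define d where "d = deriv y t' * inverse (deriv x t') - deriv y s * inverse (deriv x s)"
  have dd: "DERIV (\<lambda>v. g (v + of_int m) - g v - of_int n) w :> d"
  proof -
    have sh: "DERIV (\<lambda>v. v + of_int m) w :> 1" by (auto intro!: derivative_eq_intros)
    have "DERIV (\<lambda>v. g (v + of_int m)) w :> deriv y (xi (w + of_int m)) * inverse (deriv x (xi (w + of_int m))) * 1"
      by (rule DERIV_chain2[OF dg sh])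
    hence "DERIV (\<lambda>v. g (v + of_int m) - g v - of_int n) w :>
       deriv y (xi (w + of_int m)) * inverse (deriv x (xi (w + of_int m))) * 1
        - deriv y (xi w) * inverse (deriv x (xi w)) - 0"
      by (intro DERIV_diff dg DERIV_const)
    thus ?thesis unfolding d_def xiw xiwm by simp
  qed
  have dnz: "d \<noteq> 0"
  proof
    assume "d = 0"
    have px: "deriv x s > 0" "deriv x t' > 0" using xpos by blast+
    have "deriv y t' * inverse (deriv x t') = deriv y s * inverse (deriv x s)"
      using \<open>d = 0\<close> unfolding d_def by simp
    hence "deriv x s * deriv y t' - deriv y s * deriv x t' = 0"
      using px by (simp add: field_simps)
    thus False using transv ct' by blast
  qed
  show ?thesis
  proof (cases "\<exists>v. w < v \<and> v \<le> w + \<bar>real_of_int m\<bar> \<and> g (v + of_int m) - g v - of_int n = 0")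
    case True
    then obtain v where v: "w < v" "v \<le> w + \<bar>real_of_int m\<bar>" "g (v + of_int m) - g v - of_int n = 0"
      by blast
    show ?thesis
      by (rule bigon[OF nd minm, of w v n]) (use v d0 in auto)
  next
    case nR: False
    show ?thesis
    proof (cases "\<exists>v. w - \<bar>real_of_int m\<bar> \<le> v \<and> v < w \<and> g (v + of_int m) - g v - of_int n = 0")
      case True
      then obtain v where v: "w - \<bar>real_of_int m\<bar> \<le> v" "v < w" "g (v + of_int m) - g v - of_int n = 0"
        by blast
      show ?thesis
        by (rule bigon[OF nd minm, of v w n]) (use v d0 in auto)
    next
      case False
      have False
        by (rule caseC[OF nd _ dd dnz]) (use d0 nR False in auto)
      thus ?thesis ..
    qed
  qed
qed


end
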